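(* For every sufficiently large integer $n$, there is a complete Riemannian metric of positive Ricci curvature on $\mathbb{R}^n$ such that for every point $p\in\mathbb{R}^n$, $$\limsup_{r\to\infty}\frac{\operatorname{diam}(\partial B(p,r))}{r}\geq 1.$$
   Context: $\partial B(p,r)$ is the set of points at distance exactly $r$ from $p$, and its diameter is measured with the Riemannian distance of the metric on $\mathbb{R}^n$. *)

theory Defs
  imports "HOL-Analysis.Analysis"
begin

text \<open>R^n is modelled as the set of sequences x :: nat => real vanishing from index n on.
  Coordinates are the indices 0..n-1. Topology on this set: subspace of the product topology,
  which coincides with the Euclidean topology.\<close>

definition Rn :: "nat \<Rightarrow> (nat \<Rightarrow> real) set" where
  "Rn n = {x. \<forall>i\<ge>n. x i = 0}"

definition shift :: "(nat \<Rightarrow> real) \<Rightarrow> nat \<Rightarrow> real \<Rightarrow> (nat \<Rightarrow> real)" where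
  "shift x i t = (\<lambda>j. x j + (if j = i then t else 0))"

definition pd :: "nat \<Rightarrow> ((nat \<Rightarrow> real) \<Rightarrow> real) \<Rightarrow> (nat \<Rightarrow> real) \<Rightarrow> real" where
  "pd i f x = deriv (\<lambda>t. f (shift x i t)) 0"

fun pds :: "nat list \<Rightarrow> ((nat \<Rightarrow> real) \<Rightarrow> real) \<Rightarrow> (nat \<Rightarrow> real) \<Rightarrow> real" where
  "pds [] f = f"
| "pds (i # is) f = pd i (pds is f)"

definition smooth_on_Rn :: "nat \<Rightarrow> ((nat \<Rightarrow> real) \<Rightarrow> real) \<Rightarrow> bool" where
  "smooth_on_Rn n f \<longleftrightarrow>
     (\<forall>ks. set ks \<subseteq> {..<n} \<longrightarrow>
        continuous_on (Rn n) (pds ks f) \<and>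
        (\<forall>i<n. \<forall>x\<in>Rn n. (\<lambda>t. pds ks f (shift x i t)) differentiable (at 0)))"

definition riem_metric :: "nat \<Rightarrow> ((nat \<Rightarrow> real) \<Rightarrow> nat \<Rightarrow> nat \<Rightarrow> real) \<Rightarrow> bool" where
  "riem_metric n g \<longleftrightarrow>
     (\<forall>i<n. \<forall>j<n. smooth_on_Rn n (\<lambda>x. g x i j)) \<and>
     (\<forall>x\<in>Rn n. \<forall>i<n. \<forall>j<n. g x i j = g x j i) \<and>
     (\<forall>x\<in>Rn n. \<forall>v\<in>Rn n. (\<exists>i<n. v i \<noteq> 0) \<longrightarrow> (\<Sum>i<n. \<Sum>j<n. g x i j * v i * v j) > 0)"

definition ginv :: "nat \<Rightarrow> ((nat \<Rightarrow> real) \<Rightarrow> nat \<Rightarrow> nat \<Rightarrow> real) \<Rightarrow> (nat \<Rightarrow> real) \<Rightarrow> nat \<Rightarrow> nat \<Rightarrow> real" where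
  "ginv n g x = (SOME h. \<forall>i<n. \<forall>k<n. (\<Sum>j<n. g x i j * h j k) = (if i = k then 1 else 0))"

definition christoffel :: "nat \<Rightarrow> ((nat \<Rightarrow> real) \<Rightarrow> nat \<Rightarrow> nat \<Rightarrow> real) \<Rightarrow> nat \<Rightarrow> nat \<Rightarrow> nat \<Rightarrow> (nat \<Rightarrow> real) \<Rightarrow> real" where
  "christoffel n g k i j x = (1/2) * (\<Sum>l<n. ginv n g x k l *
      (pd i (\<lambda>y. g y j l) x + pd j (\<lambda>y. g y i l) x - pd l (\<lambda>y. g y i j) x))"

definition ricci :: "nat \<Rightarrow> ((nat \<Rightarrow> real) \<Rightarrow> nat \<Rightarrow> nat \<Rightarrow> real) \<Rightarrow> (nat \<Rightarrow> real) \<Rightarrow> nat \<Rightarrow> nat \<Rightarrow> real" where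
  "ricci n g x i j = (\<Sum>k<n. pd k (christoffel n g k i j) x - pd j (christoffel n g k i k) x
      + (\<Sum>p<n. christoffel n g k k p x * christoffel n g p i j x
               - christoffel n g k j p x * christoffel n g p i k x))"

definition pos_ricci :: "nat \<Rightarrow> ((nat \<Rightarrow> real) \<Rightarrow> nat \<Rightarrow> nat \<Rightarrow> real) \<Rightarrow> bool" where
  "pos_ricci n g \<longleftrightarrow>
     (\<forall>x\<in>Rn n. \<forall>v\<in>Rn n. (\<exists>i<n. v i \<noteq> 0) \<longrightarrow> (\<Sum>i<n. \<Sum>j<n. ricci n g x i j * v i * v j) > 0)"

definition adm_curve :: "nat \<Rightarrow> (real \<Rightarrow> nat \<Rightarrow> real) \<Rightarrow> bool" where
  "adm_curve n c \<longleftrightarrow> (\<forall>t\<in>{0..1}. c t \<in> Rn n) \<and>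
     (\<forall>i<n. (\<lambda>t. c t i) C1_differentiable_on {0..1})"

definition curve_length :: "nat \<Rightarrow> ((nat \<Rightarrow> real) \<Rightarrow> nat \<Rightarrow> nat \<Rightarrow> real) \<Rightarrow> (real \<Rightarrow> nat \<Rightarrow> real) \<Rightarrow> real" where
  "curve_length n g c = integral {0..1} (\<lambda>t. sqrt (\<Sum>i<n. \<Sum>j<n. g (c t) i j
      * vector_derivative (\<lambda>s. c s i) (at t within {0..1})
      * vector_derivative (\<lambda>s. c s j) (at t within {0..1})))"

definition rdist :: "nat \<Rightarrow> ((nat \<Rightarrow> real) \<Rightarrow> nat \<Rightarrow> nat \<Rightarrow> real) \<Rightarrow> (nat \<Rightarrow> real) \<Rightarrow> (nat \<Rightarrow> real) \<Rightarrow> real" where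
  "rdist n g p q = Inf {curve_length n g c | c. adm_curve n c \<and> c 0 = p \<and> c 1 = q}"

definition complete_metric :: "nat \<Rightarrow> ((nat \<Rightarrow> real) \<Rightarrow> nat \<Rightarrow> nat \<Rightarrow> real) \<Rightarrow> bool" where
  "complete_metric n g \<longleftrightarrow>
     (\<forall>s. (\<forall>m. s m \<in> Rn n) \<and> (\<forall>e>0. \<exists>N. \<forall>m\<ge>N. \<forall>k\<ge>N. rdist n g (s m) (s k) < e)
        \<longrightarrow> (\<exists>x\<in>Rn n. (\<lambda>m. rdist n g (s m) x) \<longlonglongrightarrow> 0))"

definition geo_sphere :: "nat \<Rightarrow> ((nat \<Rightarrow> real) \<Rightarrow> nat \<Rightarrow> nat \<Rightarrow> real) \<Rightarrow> (nat \<Rightarrow> real) \<Rightarrow> real \<Rightarrow> (nat \<Rightarrow> real) set" where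
  "geo_sphere n g p r = {x \<in> Rn n. rdist n g p x = r}"

definition rdiam :: "nat \<Rightarrow> ((nat \<Rightarrow> real) \<Rightarrow> nat \<Rightarrow> nat \<Rightarrow> real) \<Rightarrow> (nat \<Rightarrow> real) set \<Rightarrow> real" where
  "rdiam n g S = Sup {rdist n g x y | x y. x \<in> S \<and> y \<in> S}"

end

theory Submission
  imports Defs "HOL-Analysis.Analysis"
begin

lemma shift_Rn: "x \<in> Rn n \<Longrightarrow> i < n \<Longrightarrow> shift x i t \<in> Rn n"
  by (auto simp: Rn_def shift_def)

lemma shift_0[simp]: "shift x i 0 = x"
  by (auto simp: shift_def)

lemma shift_app: "shift x i t j = x j + (if j = i then t else 0)"
  by (simp add: shift_def)

inductive nice :: "nat \<Rightarrow> ((nat \<Rightarrow> real) \<Rightarrow> real) \<Rightarrow> bool" for n where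
  nconst: "nice n (\<lambda>x. c)"
| ncoord: "i < n \<Longrightarrow> nice n (\<lambda>x. x i)"
| nadd: "nice n f \<Longrightarrow> nice n g \<Longrightarrow> nice n (\<lambda>x. f x + g x)"
| nmult: "nice n f \<Longrightarrow> nice n g \<Longrightarrow> nice n (\<lambda>x. f x * g x)"
| ninv: "nice n f \<Longrightarrow> (\<forall>x\<in>Rn n. f x \<noteq> 0) \<Longrightarrow> nice n (\<lambda>x. inverse (f x))"
| nsqrt: "nice n f \<Longrightarrow> (\<forall>x\<in>Rn n. f x > 0) \<Longrightarrow> nice n (\<lambda>x. sqrt (f x))"
| ncong: "nice n f \<Longrightarrow> (\<forall>x\<in>Rn n. f x = g x) \<Longrightarrow> nice n g"

lemma nice_cont: "nice n f \<Longrightarrow> continuous_on (Rn n) f"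
proof (induction rule: nice.induct)
  case (nconst c)
  show ?case by (rule continuous_on_const)
next
  case (ncoord i)
  show ?case
    by (rule continuous_on_subset[OF continuous_on_product_coordinates]) simp
next
  case (nadd f g)
  then show ?case by (auto intro!: continuous_on_add)
next
  case (nmult f g)
  then show ?case by (auto intro!: continuous_on_mult)
next
  case (ninv f)
  then show ?case by (intro continuous_on_inverse) auto
next
  case (nsqrt f)
  then show ?case by (auto intro!: continuous_on_real_sqrt)
next
  case (ncong f g)
  then show ?case using continuous_on_cong by blast
qed

lemma nice_deriv:
  assumes "nice n f" "i < n"
  shows "\<exists>D. nice n D \<and> (\<forall>x\<in>Rn n. ((\<lambda>t. f (shift x i t)) has_real_derivative D x) (at 0))"
  using assms(1)
proof (induction rule: nice.induct)
  case (nconst c)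
  show ?case by (rule exI[of _ "\<lambda>x. 0"]) (auto intro: nice.nconst)
next
  case (ncoord j)
  show ?case
  proof (rule exI[of _ "\<lambda>x. if j = i then 1 else 0"], intro conjI ballI)
    show "nice n (\<lambda>x. if j = i then 1 else 0)" by (rule nice.nconst)
    fix x assume "x \<in> Rn n"
    show "((\<lambda>t. shift x i t j) has_real_derivative (if j = i then 1 else 0)) (at 0)"
      by (cases "j = i") (auto intro!: derivative_eq_intros simp: shift_app)
  qed
next
  case (nadd f g)
  then obtain Df Dg where a: "nice n Df" "nice n Dg"
    and d1: "\<forall>x\<in>Rn n. ((\<lambda>t. f (shift x i t)) has_real_derivative Df x) (at 0)"
    and d2: "\<forall>x\<in>Rn n. ((\<lambda>t. g (shift x i t)) has_real_derivative Dg x) (at 0)" by blast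
  show ?case
  proof (intro exI[of _ "\<lambda>x. Df x + Dg x"] conjI ballI)
    show "nice n (\<lambda>x. Df x + Dg x)" by (rule nice.nadd[OF a])
    fix x assume x: "x \<in> Rn n"
    show "((\<lambda>t. f (shift x i t) + g (shift x i t)) has_real_derivative Df x + Dg x) (at 0)"
      using DERIV_add[OF d1[rule_format, OF x] d2[rule_format, OF x]] by simp
  qed
next
  case (nmult f g)
  then obtain Df Dg where a: "nice n Df" "nice n Dg"
    and d1: "\<forall>x\<in>Rn n. ((\<lambda>t. f (shift x i t)) has_real_derivative Df x) (at 0)"
    and d2: "\<forall>x\<in>Rn n. ((\<lambda>t. g (shift x i t)) has_real_derivative Dg x) (at 0)" by blast
  show ?case
  proof (intro exI[of _ "\<lambda>x. f x * Dg x + Df x * g x"] conjI ballI)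
    show "nice n (\<lambda>x. f x * Dg x + Df x * g x)"
      by (rule nice.nadd[OF nice.nmult[OF nmult.hyps(1) a(2)] nice.nmult[OF a(1) nmult.hyps(2)]])
    fix x assume x: "x \<in> Rn n"
    show "((\<lambda>t. f (shift x i t) * g (shift x i t)) has_real_derivative f x * Dg x + Df x * g x) (at 0)"
      using DERIV_mult[OF d1[rule_format, OF x] d2[rule_format, OF x]] by (simp add: algebra_simps)
  qed
next
  case (ninv f)
  then obtain Df where a: "nice n Df"
    and d1: "\<forall>x\<in>Rn n. ((\<lambda>t. f (shift x i t)) has_real_derivative Df x) (at 0)" by blast
  show ?case
  proof (intro exI[of _ "\<lambda>x. - (inverse (f x) * Df x * inverse (f x))"] conjI ballI)
    have i: "nice n (\<lambda>x. inverse (f x))" by (rule nice.ninv[OF ninv.hyps(1) ninv.hyps(2)])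
    have "nice n (\<lambda>x. (-1) * (inverse (f x) * Df x * inverse (f x)))"
      by (rule nice.nmult[OF nice.nconst nice.nmult[OF nice.nmult[OF i a] i]])
    then show "nice n (\<lambda>x. - (inverse (f x) * Df x * inverse (f x)))"
      by (rule ncong) simp
    fix x assume x: "x \<in> Rn n"
    show "((\<lambda>t. inverse (f (shift x i t))) has_real_derivative - (inverse (f x) * Df x * inverse (f x))) (at 0)"
      using DERIV_inverse'[OF d1[rule_format, OF x]] ninv x by simp
  qed
next
  case (nsqrt f)
  then obtain Df where a: "nice n Df"
    and d1: "\<forall>x\<in>Rn n. ((\<lambda>t. f (shift x i t)) has_real_derivative Df x) (at 0)" by blast
  show ?case
  proof (intro exI[of _ "\<lambda>x. Df x * (inverse (sqrt (f x)) / 2)"] conjI ballI)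
    have s: "nice n (\<lambda>x. sqrt (f x))" by (rule nice.nsqrt[OF nsqrt.hyps(1) nsqrt.hyps(2)])
    have s2: "nice n (\<lambda>x. inverse (sqrt (f x)))"
      by (rule nice.ninv[OF s]) (use nsqrt.hyps(2) in auto)
    have "nice n (\<lambda>x. Df x * (inverse (sqrt (f x)) * (1/2)))"
      by (rule nice.nmult[OF a nice.nmult[OF s2 nice.nconst]])
    then show "nice n (\<lambda>x. Df x * (inverse (sqrt (f x)) / 2))"
      by (rule ncong) simp
    fix x assume x: "x \<in> Rn n"
    have "(sqrt has_real_derivative inverse (sqrt (f x)) / 2) (at (f (shift x i 0)))"
      using DERIV_real_sqrt nsqrt x by simp
    from DERIV_chain2[OF this d1[rule_format, OF x]]
    show "((\<lambda>t. sqrt (f (shift x i t))) has_real_derivative Df x * (inverse (sqrt (f x)) / 2)) (at 0)"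
      by (simp add: mult.commute)
  qed
next
  case (ncong f g)
  then obtain D where "nice n D"
    and d1: "\<forall>x\<in>Rn n. ((\<lambda>t. f (shift x i t)) has_real_derivative D x) (at 0)" by blast
  show ?case
  proof (intro exI[of _ D] conjI ballI)
    show "nice n D" by fact
    fix x assume x: "x \<in> Rn n"
    have "(\<lambda>t. f (shift x i t)) = (\<lambda>t. g (shift x i t))"
      using ncong shift_Rn[OF x \<open>i < n\<close>] by auto
    then show "((\<lambda>t. g (shift x i t)) has_real_derivative D x) (at 0)"
      using d1 x by metis
  qed
qed

lemma pd_local:
  assumes "\<forall>y\<in>Rn n. f y = g y" "x \<in> Rn n" "i < n"
  shows "pd i f x = pd i g x"
proof -
  have "(\<lambda>t. f (shift x i t)) = (\<lambda>t. g (shift x i t))"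
    using assms shift_Rn by auto
  then show ?thesis by (simp add: pd_def)
qed

lemma pd_eq:
  assumes "x \<in> Rn n" "i < n"
    "((\<lambda>t. f (shift x i t)) has_real_derivative D) (at 0)"
  shows "pd i f x = D"
  using assms(3) unfolding pd_def by (rule DERIV_imp_deriv)

lemma nice_pd:
  assumes "nice n f" "i < n"
  shows "nice n (pd i f)"
proof -
  obtain D where D: "nice n D" "\<forall>x\<in>Rn n. ((\<lambda>t. f (shift x i t)) has_real_derivative D x) (at 0)"
    using nice_deriv[OF assms] by blast
  show ?thesis
  proof (rule ncong[OF D(1)], intro ballI)
    fix x assume "x \<in> Rn n"
    then show "D x = pd i f x" using pd_eq[OF _ assms(2)] D(2) by metis
  qed
qed

lemma nice_pds: "nice n f \<Longrightarrow> set ks \<subseteq> {..<n} \<Longrightarrow> nice n (pds ks f)"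
  by (induction ks) (auto intro: nice_pd)

lemma nice_smooth:
  assumes "nice n f"
  shows "smooth_on_Rn n f"
  unfolding smooth_on_Rn_def
proof (intro allI impI conjI ballI)
  fix ks :: "nat list" assume ks: "set ks \<subseteq> {..<n}"
  then have N: "nice n (pds ks f)" using nice_pds assms by blast
  then show "continuous_on (Rn n) (pds ks f)" by (rule nice_cont)
  fix i x assume "i < n" "x \<in> Rn n"
  then show "(\<lambda>t. pds ks f (shift x i t)) differentiable at 0"
    using nice_deriv[OF N] real_differentiable_def by blast
qed

definition ssq :: "nat \<Rightarrow> (nat \<Rightarrow> real) \<Rightarrow> real" where
  "ssq n x = (\<Sum>i<n. (x i)^2)"

definition phi :: "nat \<Rightarrow> (nat \<Rightarrow> real) \<Rightarrow> real" where
  "phi n x = inverse (sqrt (1 + ssq n x))"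

definition gm :: "nat \<Rightarrow> (nat \<Rightarrow> real) \<Rightarrow> nat \<Rightarrow> nat \<Rightarrow> real" where
  "gm n x i j = (if i = j then phi n x else 0)"

lemma ssq_nonneg[simp]: "0 \<le> ssq n x"
  by (simp add: ssq_def sum_nonneg)

lemma ssq_pos1[simp]: "0 < 1 + ssq n x"
  using ssq_nonneg[of n x] by linarith

lemma ssq_ne[simp]: "1 + ssq n x \<noteq> 0"
  using ssq_pos1[of n x] by linarith

lemma ssq_shift: "i < n \<Longrightarrow> ssq n (shift x i t) = ssq n x + 2 * t * x i + t^2"
proof -
  assume i: "i < n"
  have "\<And>j. (shift x i t j)^2 = (x j)^2 + (if j = i then 2 * t * x i + t^2 else 0)"
    by (auto simp: shift_def power2_eq_square algebra_simps)
  then have "ssq n (shift x i t) = (\<Sum>j<n. (x j)^2) + (\<Sum>j<n. (if j = i then 2 * t * x i + t^2 else 0))"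
    by (simp add: ssq_def sum.distrib)
  also have "\<dots> = ssq n x + 2 * t * x i + t^2" using i by (simp add: ssq_def)
  finally show ?thesis .
qed

lemma nice_sum: "finite I \<Longrightarrow> (\<forall>i\<in>I. nice n (f i)) \<Longrightarrow> nice n (\<lambda>x. \<Sum>i\<in>I. f i x)"
proof (induction I rule: finite_induct)
  case empty
  then show ?case using nconst[of n 0] by simp
next
  case (insert a F)
  then show ?case by (auto intro: nadd)
qed

lemma nice_ssq: "nice n (ssq n)"
proof -
  have "nice n (\<lambda>x. \<Sum>i<n. x i * x i)"
    by (rule nice_sum) (auto intro: nice.nmult nice.ncoord)
  then show ?thesis
    by (rule ncong) (auto simp: ssq_def power2_eq_square)
qed

lemma nice_phi: "nice n (phi n)"
proof -
  have "nice n (\<lambda>x. inverse (sqrt (1 + ssq n x)))"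
    by (intro ninv nsqrt nadd nconst nice_ssq) auto
  then show ?thesis by (rule ncong) (auto simp: phi_def)
qed

lemma phi_pos: "0 < phi n x"
  by (simp add: phi_def)

lemma riem_gm: "riem_metric n (gm n)"
  unfolding riem_metric_def
proof (intro conjI allI impI ballI)
  fix i j assume "i < n" "j < n"
  show "smooth_on_Rn n (\<lambda>x. gm n x i j)"
  proof (cases "i = j")
    case True
    then show ?thesis using nice_smooth[OF nice_phi] by (simp add: gm_def)
  next
    case False
    then show ?thesis using nice_smooth[OF nconst[of n 0]] by (simp add: gm_def)
  qed
next
  fix x i j show "gm n x i j = gm n x j i" by (auto simp: gm_def)
next
  fix x v :: "nat \<Rightarrow> real"
  assume "\<exists>i<n. v i \<noteq> 0"
  then obtain i where i: "i < n" "v i \<noteq> 0" by blast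
  have "(\<Sum>i<n. \<Sum>j<n. gm n x i j * v i * v j) = (\<Sum>i<n. phi n x * (v i)^2)"
  proof (rule sum.cong)
    fix i assume "i \<in> {..<n}"
    then have "(\<Sum>j<n. gm n x i j * v i * v j) = (\<Sum>j<n. if i = j then phi n x * v i * v j else 0)"
      by (intro sum.cong) (auto simp: gm_def)
    also have "\<dots> = phi n x * (v i)^2" using \<open>i \<in> {..<n}\<close> by (simp add: power2_eq_square)
    finally show "(\<Sum>j<n. gm n x i j * v i * v j) = phi n x * (v i)^2" .
  qed simp
  also have "\<dots> = phi n x * (\<Sum>i<n. (v i)^2)" by (simp add: sum_distrib_left)
  also have "\<dots> > 0"
  proof -
    have "(\<Sum>i<n. (v i)^2) > 0"
      by (rule sum_pos2[of _ i]) (use i in auto)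
    then show ?thesis using phi_pos by simp
  qed
  finally show "(\<Sum>i<n. \<Sum>j<n. gm n x i j * v i * v j) > 0" .
qed

abbreviation AA :: "nat \<Rightarrow> (nat \<Rightarrow> real) \<Rightarrow> real" where
  "AA n x \<equiv> sqrt (1 + ssq n x)"

lemma AA_pos: "0 < AA n x" by simp

lemma AA_sq: "(AA n x)^2 = 1 + ssq n x"
  using ssq_pos1[of n x] by simp

lemma dphi:
  assumes "x \<in> Rn n" "i < n"
  shows "pd i (phi n) x = - x i / (AA n x)^3"
proof -
  define u where "u t = 1 + ssq n x + 2 * t * x i + t^2" for t
  have fu: "(\<lambda>t. phi n (shift x i t)) = (\<lambda>t. inverse (sqrt (u t)))"
    using assms by (auto simp: phi_def u_def ssq_shift add.assoc)
  have du: "(u has_real_derivative 2 * x i) (at 0)"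
    unfolding u_def by (auto intro!: derivative_eq_intros)
  have u0: "u 0 = 1 + ssq n x" by (simp add: u_def)
  have ds: "((\<lambda>t. sqrt (u t)) has_real_derivative inverse (sqrt (u 0)) / 2 * (2 * x i)) (at 0)"
    by (rule DERIV_chain2[OF DERIV_real_sqrt du]) (simp add: u0)
  have di: "((\<lambda>t. inverse (sqrt (u t))) has_real_derivative
      - (inverse (sqrt (u 0)) * (inverse (sqrt (u 0)) / 2 * (2 * x i)) * inverse (sqrt (u 0)))) (at 0)"
    by (rule DERIV_inverse'[OF ds]) (simp add: u0)
  have "pd i (phi n) x = - (inverse (sqrt (u 0)) * (inverse (sqrt (u 0)) / 2 * (2 * x i)) * inverse (sqrt (u 0)))"
    by (rule pd_eq[OF assms]) (use di fu in simp)
  also have "\<dots> = - x i / (AA n x)^3"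
    by (simp add: u0 field_simps power3_eq_cube)
  finally show ?thesis .
qed

lemma pd_const: "x \<in> Rn n \<Longrightarrow> i < n \<Longrightarrow> pd i (\<lambda>y. c) x = 0"
  by (rule pd_eq) auto

lemma dgm:
  assumes "x \<in> Rn n" "i < n"
  shows "pd i (\<lambda>y. gm n y j l) x = (if j = l then - x i / (AA n x)^3 else 0)"
proof (cases "j = l")
  case True
  then have "(\<lambda>y. gm n y j l) = phi n" by (auto simp: gm_def)
  then show ?thesis using dphi[OF assms] True by simp
next
  case False
  then have "(\<lambda>y. gm n y j l) = (\<lambda>y. 0)" by (auto simp: gm_def)
  then show ?thesis using pd_const[OF assms] False by simp
qed

lemma ginv_gm:
  assumes "j < n" "k < n"
  shows "ginv n (gm n) x j k = (if j = k then AA n x else 0)"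
proof -
  define P where "P h \<longleftrightarrow> (\<forall>i<n. \<forall>k<n. (\<Sum>j<n. gm n x i j * h j k) = (if i = k then 1 else 0))"
    for h :: "nat \<Rightarrow> nat \<Rightarrow> real"
  have key: "(\<Sum>j<n. gm n x i j * h j k) = phi n x * h i k" if "i < n" for i k h
  proof -
    have "(\<Sum>j<n. gm n x i j * h j k) = (\<Sum>j<n. if i = j then phi n x * h j k else 0)"
      by (intro sum.cong) (auto simp: gm_def)
    then show ?thesis using that by simp
  qed
  have "P (\<lambda>j k. if j = k then AA n x else 0)"
    unfolding P_def
  proof (intro allI impI)
    fix i k assume "i < n" "k < n"
    then show "(\<Sum>j<n. gm n x i j * (if j = k then AA n x else 0)) = (if i = k then 1 else 0)"
      using key[of i "\<lambda>j k. if j = k then AA n x else 0" k] by (simp add: phi_def)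
  qed
  then have "P (ginv n (gm n) x)"
    unfolding ginv_def P_def[symmetric] by (metis someI_ex)
  then have "phi n x * ginv n (gm n) x j k = (if j = k then 1 else 0)"
    using assms key unfolding P_def by metis
  then show ?thesis by (auto simp: phi_def field_simps split: if_splits)
qed

definition Nn :: "nat \<Rightarrow> nat \<Rightarrow> nat \<Rightarrow> (nat \<Rightarrow> real) \<Rightarrow> real" where
  "Nn k i j x = (if j = k then x i else 0) + (if i = k then x j else 0) - (if i = j then x k else 0)"

definition Np :: "nat \<Rightarrow> nat \<Rightarrow> nat \<Rightarrow> nat \<Rightarrow> real" where
  "Np m k i j = (if j = k \<and> i = m then 1 else 0) + (if i = k \<and> j = m then 1 else 0) - (if i = j \<and> k = m then 1 else 0)"

definition Gm :: "nat \<Rightarrow> nat \<Rightarrow> nat \<Rightarrow> nat \<Rightarrow> (nat \<Rightarrow> real) \<Rightarrow> real" where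
  "Gm n k i j x = - Nn k i j x / (2 * (1 + ssq n x))"

lemma cube_aux: "(a::real) > 0 \<Longrightarrow> a * (y / a^3) = y / a^2"
  by (simp add: field_simps power3_eq_cube power2_eq_square)

lemma AA_cube: "AA n x * (y / (AA n x)^3) = y / (1 + ssq n x)"
  using cube_aux[OF AA_pos[of n x], of y] by (simp only: AA_sq)

lemma AA_cube2: "(AA n x)^3 = AA n x * (1 + ssq n x)"
proof -
  have "(AA n x)^3 = AA n x * (AA n x)^2" by (simp add: power3_eq_cube power2_eq_square)
  then show ?thesis by (simp only: AA_sq)
qed

lemma frac_aux: "(a::real) > 0 \<Longrightarrow> 1 + s > 0 \<Longrightarrow> y * a / (a + s * a) = y / (1 + s)"
proof -
  assume a: "a > 0" "1 + s > 0"
  have "a + s * a = a * (1 + s)" by (simp add: algebra_simps)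
  then show ?thesis using a by simp
qed

lemma AA_frac: "y * AA n x / (AA n x + ssq n x * AA n x) = y / (1 + ssq n x)"
  by (rule frac_aux) auto

lemma ssq_ne2: "2 + 2 * ssq n x \<noteq> 0"
  using ssq_nonneg[of n x] by linarith

lemma chr_Gm:
  assumes "x \<in> Rn n" "i < n" "j < n" "k < n"
  shows "christoffel n (gm n) k i j x = Gm n k i j x"
proof -
  let ?B = "\<lambda>l. pd i (\<lambda>y. gm n y j l) x + pd j (\<lambda>y. gm n y i l) x - pd l (\<lambda>y. gm n y i j) x"
  have "christoffel n (gm n) k i j x = (1/2) * (\<Sum>l<n. (if k = l then AA n x * ?B l else 0))"
    unfolding christoffel_def by (intro arg_cong2[where f="(*)"] refl sum.cong) (auto simp: ginv_gm assms)
  also have "\<dots> = (1/2) * (AA n x * ?B k)" using assms by simp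
  also have "\<dots> = Gm n k i j x"
    using assms by (simp add: dgm right_diff_distrib distrib_left AA_cube if_distrib)
       (auto simp: Gm_def Nn_def AA_frac AA_cube2 ssq_ne2 field_simps)
  finally show ?thesis .
qed

lemma Nn_shift: "Nn k i j (shift x m t) = Nn k i j x + t * Np m k i j"
  by (auto simp: Nn_def Np_def shift_def algebra_simps)

lemma dGm:
  assumes "x \<in> Rn n" "m < n"
  shows "pd m (Gm n k i j) x = - Np m k i j / (2 * (1 + ssq n x)) + Nn k i j x * x m / (1 + ssq n x)^2"
proof -
  define q where "q = 1 + ssq n x"
  have q: "q > 0" by (simp add: q_def)
  have f: "(\<lambda>t. Gm n k i j (shift x m t)) = (\<lambda>t. - (Nn k i j x + t * Np m k i j) / (2 * (q + 2 * t * x m + t^2)))"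
    using assms by (auto simp: Gm_def Nn_shift ssq_shift q_def add.assoc)
  have d: "((\<lambda>t. - (Nn k i j x + t * Np m k i j) / (2 * (q + 2 * t * x m + t^2))) has_real_derivative
     (- Np m k i j * (2 * q) + Nn k i j x * (4 * x m)) / (2 * q)^2) (at 0)"
    using q by (auto intro!: derivative_eq_intros simp: power2_eq_square field_simps)
  have "pd m (Gm n k i j) x = (- Np m k i j * (2 * q) + Nn k i j x * (4 * x m)) / (2 * q)^2"
    by (rule pd_eq[OF assms]) (use d f in simp)
  also have "\<dots> = - Np m k i j / (2 * q) + Nn k i j x * x m / q^2"
    using q by (simp add: field_simps power2_eq_square)
  finally show ?thesis by (simp add: q_def)
qed

lemma dchr:
  assumes "x \<in> Rn n" "m < n" "i < n" "j < n" "k < n"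
  shows "pd m (christoffel n (gm n) k i j) x = - Np m k i j / (2 * (1 + ssq n x)) + Nn k i j x * x m / (1 + ssq n x)^2"
proof -
  have "pd m (christoffel n (gm n) k i j) x = pd m (Gm n k i j) x"
    by (rule pd_local[OF _ assms(1,2)]) (use chr_Gm assms in auto)
  then show ?thesis using dGm assms by simp
qed

lemma ifz_mult1: "(if P then a else 0) * (b::real) = (if P then a * b else 0)" by simp
lemma ifz_mult2: "(b::real) * (if P then a else 0) = (if P then b * a else 0)" by simp
lemma sum_if_out: "(\<Sum>p\<in>A. if P then f p else (0::real)) = (if P then (\<Sum>p\<in>A. f p) else 0)" by simp

lemma ssq_alt: "(\<Sum>p<n. x p * x p) = ssq n x"
  by (simp add: ssq_def power2_eq_square)

lemma Np_kk: "Np k k i j = (if i = j then (if i = k then 2 else 0) - 1 else 0)"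
  by (auto simp: Np_def)

lemma L1: "i < n \<Longrightarrow> j < n \<Longrightarrow> (\<Sum>k<n. Np k k i j) = (if i = j then 2 - real n else 0)"
  by (cases "i = j") (simp_all add: Np_kk sum_subtractf)

lemma L2: "i < n \<Longrightarrow> j < n \<Longrightarrow> (\<Sum>k<n. Nn k i j x * x k) = 2 * x i * x j - (if i = j then ssq n x else 0)"
  by (cases "i = j")
     (auto simp: Nn_def sum.distrib sum_subtractf algebra_simps ifz_mult1 ifz_mult2 ssq_alt)

lemma L3: "Np j k i k = (if i = j then 1 else 0)"
  by (auto simp: Np_def)

lemma L3b: "Nn k i k x = x i"
  by (auto simp: Nn_def)

lemma L4: "Nn k k p x = x p"
  by (auto simp: Nn_def)

lemma L5inner: "i < n \<Longrightarrow> j < n \<Longrightarrow> k < n \<Longrightarrow>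
  (\<Sum>p<n. Nn k j p x * Nn p i k x) = x i * x j + (if j = k then x i * x k else 0)
     - (if i = j \<and> j = k then ssq n x else 0) - (if i = j then x k * x k else 0)
     + (if i = k then x k * x j else 0)"
  by (cases "i = k"; cases "j = k"; cases "i = j")
     (simp_all add: Nn_def sum.distrib sum_subtractf algebra_simps ifz_mult1 ifz_mult2 ssq_alt)

lemma L5: "i < n \<Longrightarrow> j < n \<Longrightarrow>
  (\<Sum>k<n. \<Sum>p<n. Nn k j p x * Nn p i k x) = (real n + 2) * x i * x j - (if i = j then 2 * ssq n x else 0)"
  by (cases "i = j")
     (simp_all add: L5inner sum.distrib sum_subtractf algebra_simps ssq_alt)

lemma ricci_closed:
  assumes x: "x \<in> Rn n" and ij: "i < n" "j < n"
  shows "ricci n (gm n) x i j =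
    (if i = j then (real n - 1) / (1 + ssq n x) - ssq n x / (1 + ssq n x)^2
        - (real n - 2) * ssq n x / (4 * (1 + ssq n x)^2) else 0)
    + (- 3 * (real n - 2) / (4 * (1 + ssq n x)^2)) * x i * x j"
proof -
  define q where "q = 1 + ssq n x"
  define S where "S = ssq n x"
  have q: "q > 0" "q = 1 + S" by (simp_all add: q_def S_def)
  have r: "ricci n (gm n) x i j =
      (\<Sum>k<n. - Np k k i j / (2 * q) + Nn k i j x * x k / q^2)
    - (\<Sum>k<n. - Np j k i k / (2 * q) + Nn k i k x * x j / q^2)
    + (\<Sum>k<n. \<Sum>p<n. Gm n k k p x * Gm n p i j x)
    - (\<Sum>k<n. \<Sum>p<n. Gm n k j p x * Gm n p i k x)"
    unfolding ricci_def using x ij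
    by (simp add: sum.distrib sum_subtractf dchr chr_Gm q_def)
  have p1: "(\<Sum>k<n. - Np k k i j / (2 * q) + Nn k i j x * x k / q^2)
      = - (if i = j then 2 - real n else 0) / (2 * q) + (2 * x i * x j - (if i = j then S else 0)) / q^2"
  proof -
    have "(\<Sum>k<n. - Np k k i j / (2 * q) + Nn k i j x * x k / q^2)
       = - (\<Sum>k<n. Np k k i j) / (2 * q) + (\<Sum>k<n. Nn k i j x * x k) / q^2"
      by (simp add: sum.distrib sum_divide_distrib sum_negf sum_subtractf)
    then show ?thesis using ij by (simp only: L1 L2 S_def)
  qed
  have p2: "(\<Sum>k<n. - Np j k i k / (2 * q) + Nn k i k x * x j / q^2)
      = real n * (- (if i = j then 1 else 0) / (2 * q) + x i * x j / q^2)"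
    by (simp add: L3 L3b)
  have p3: "(\<Sum>k<n. \<Sum>p<n. Gm n k k p x * Gm n p i j x) = real n * (2 * x i * x j - (if i = j then S else 0)) / (4 * q^2)"
  proof -
    have "(\<Sum>k<n. \<Sum>p<n. Gm n k k p x * Gm n p i j x) = (\<Sum>k<n. (\<Sum>p<n. Nn p i j x * x p) / (4 * q^2))"
      by (intro sum.cong refl) (simp add: Gm_def L4 q_def sum_divide_distrib power2_eq_square algebra_simps)
    also have "\<dots> = real n * (2 * x i * x j - (if i = j then S else 0)) / (4 * q^2)"
      using ij by (simp add: L2 S_def)
    finally show ?thesis .
  qed
  have p4: "(\<Sum>k<n. \<Sum>p<n. Gm n k j p x * Gm n p i k x) = ((real n + 2) * x i * x j - (if i = j then 2 * S else 0)) / (4 * q^2)"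
  proof -
    have "(\<Sum>k<n. \<Sum>p<n. Gm n k j p x * Gm n p i k x) = (\<Sum>k<n. \<Sum>p<n. Nn k j p x * Nn p i k x) / (4 * q^2)"
      by (simp add: Gm_def q_def sum_divide_distrib power2_eq_square algebra_simps)
    also have "\<dots> = ((real n + 2) * x i * x j - (if i = j then 2 * S else 0)) / (4 * q^2)"
      using ij by (simp add: L5 S_def)
    finally show ?thesis .
  qed
  show ?thesis
  proof -
    have Sq: "S = q - 1" using q by simp
    show ?thesis
      unfolding r p1 p2 p3 p4 q_def[symmetric] S_def[symmetric] Sq
      using q(1) by (cases "i = j") (simp_all add: field_simps power2_eq_square)
  qed
qed

lemma sdelta: "(i::nat) < n \<Longrightarrow> (\<Sum>j<n. if i = j then f j else (0::real)) = f i"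
  by (simp add: sum.delta')

lemma quad_form:
  fixes al be :: real and n :: nat and x v :: "nat \<Rightarrow> real"
  shows "(\<Sum>i<n. \<Sum>j<n. ((if i = j then al else 0) + be * x i * x j) * v i * v j)
     = al * (\<Sum>i<n. (v i)^2) + be * (\<Sum>i<n. x i * v i)^2"
proof -
  have "(\<Sum>i<n. \<Sum>j<n. ((if i = j then al else 0) + be * x i * x j) * v i * v j)
      = (\<Sum>i<n. al * (v i)^2 + be * (x i * v i) * (\<Sum>j<n. x j * v j))"
  proof (rule sum.cong[OF refl])
    fix i assume i: "i \<in> {..<n}"
    have "(\<Sum>j<n. ((if i = j then al else 0) + be * x i * x j) * v i * v j)
       = (\<Sum>j<n. (if i = j then al * v i * v j else 0) + be * (x i * v i) * (x j * v j))"
      by (intro sum.cong refl) (simp add: algebra_simps)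
    also have "\<dots> = (\<Sum>j<n. (if i = j then al * v i * v j else 0)) + (\<Sum>j<n. be * (x i * v i) * (x j * v j))"
      by (rule sum.distrib)
    also have "\<dots> = al * (v i)^2 + be * (x i * v i) * (\<Sum>j<n. x j * v j)"
    proof -
      have d: "(\<Sum>j<n. (if i = j then al * v i * v j else 0)) = al * (v i)^2"
        using i sdelta[of i n "\<lambda>j. al * v i * v j"] by (simp add: power2_eq_square)
      have e: "(\<Sum>j<n. be * (x i * v i) * (x j * v j)) = be * (x i * v i) * (\<Sum>j<n. x j * v j)"
        by (simp add: sum_distrib_left)
      show ?thesis by (simp only: d e)
    qed
    finally show "(\<Sum>j<n. ((if i = j then al else 0) + be * x i * x j) * v i * v j)
       = al * (v i)^2 + be * (x i * v i) * (\<Sum>j<n. x j * v j)" .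
  qed
  also have "\<dots> = al * (\<Sum>i<n. (v i)^2) + be * (\<Sum>i<n. x i * v i)^2"
  proof -
    define C where "C = (\<Sum>j<n. x j * v j)"
    have "(\<Sum>i<n. al * (v i)^2 + be * (x i * v i) * C) = (\<Sum>i<n. al * (v i)^2) + (\<Sum>i<n. be * (x i * v i) * C)"
      by (rule sum.distrib)
    also have "(\<Sum>i<n. al * (v i)^2) = al * (\<Sum>i<n. (v i)^2)" by (rule sum_distrib_left[symmetric])
    also have "(\<Sum>i<n. be * (x i * v i) * C) = (\<Sum>i<n. be * (x i * v i)) * C" by (rule sum_distrib_right[symmetric])
    also have "(\<Sum>i<n. be * (x i * v i)) = be * C" unfolding C_def by (rule sum_distrib_left[symmetric])
    finally show ?thesis unfolding C_def by (simp add: power2_eq_square mult.assoc)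
  qed
  finally show ?thesis .
qed

lemma pos_ricci_gm:
  assumes n: "n \<ge> 2"
  shows "pos_ricci n (gm n)"
  unfolding pos_ricci_def
proof (intro ballI impI)
  fix x v assume x: "x \<in> Rn n" and v: "v \<in> Rn n" and nz: "\<exists>i<n. v i \<noteq> 0"
  define S where "S = ssq n x"
  define q where "q = 1 + S"
  define V where "V = (\<Sum>i<n. (v i)^2)"
  define C where "C = (\<Sum>i<n. x i * v i)"
  define al where "al = (real n - 1) / q - S / q^2 - (real n - 2) * S / (4 * q^2)"
  define be where "be = - 3 * (real n - 2) / (4 * q^2)"
  have q: "q > 0" "S \<ge> 0" by (simp_all add: q_def S_def)
  have "(\<Sum>i<n. \<Sum>j<n. ricci n (gm n) x i j * v i * v j)
      = (\<Sum>i<n. \<Sum>j<n. ((if i = j then al else 0) + be * x i * x j) * v i * v j)"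
    by (intro sum.cong refl) (simp add: ricci_closed[OF x] al_def be_def q_def S_def)
  also have "\<dots> = al * V + be * C^2" by (simp add: quad_form V_def C_def)
  finally have eq: "(\<Sum>i<n. \<Sum>j<n. ricci n (gm n) x i j * v i * v j) = al * V + be * C^2" .
  have CS: "C^2 \<le> S * V"
    unfolding C_def S_def V_def ssq_def by (rule Cauchy_Schwarz_ineq_sum)
  have be0: "be \<le> 0" using n q by (simp add: be_def divide_nonpos_pos)
  have Vpos: "V > 0"
  proof -
    obtain i where i: "i < n" "v i \<noteq> 0" using nz by blast
    show ?thesis unfolding V_def by (rule sum_pos2[of _ i]) (use i in auto)
  qed
  have "be * (S * V) \<le> be * C^2" using CS be0 by (rule mult_left_mono_neg)
  then have "al * V + be * C^2 \<ge> (al + be * S) * V" by (simp add: algebra_simps)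
  moreover have "(al + be * S) * V = (real n - 1) / q^2 * V"
  proof -
    have Sq: "S = q - 1" by (simp add: q_def)
    have "al + be * S = (real n - 1) / q^2"
      unfolding al_def be_def Sq using q(1) by (simp add: field_simps power2_eq_square)
    then show ?thesis by simp
  qed
  moreover have "(real n - 1) / q^2 * V > 0" using n q Vpos by simp
  ultimately show "(\<Sum>i<n. \<Sum>j<n. ricci n (gm n) x i j * v i * v j) > 0"
    using eq by linarith
qed

definition cd :: "(real \<Rightarrow> nat \<Rightarrow> real) \<Rightarrow> nat \<Rightarrow> real \<Rightarrow> real" where
  "cd c i t = vector_derivative (\<lambda>s. c s i) (at t within {0..1})"

definition lenf :: "nat \<Rightarrow> (real \<Rightarrow> nat \<Rightarrow> real) \<Rightarrow> real \<Rightarrow> real" where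
  "lenf n c t = sqrt (phi n (c t) * (\<Sum>i<n. (cd c i t)^2))"

lemma adm_hasderiv:
  assumes "adm_curve n c" "i < n" "t \<in> {0..1}"
  shows "((\<lambda>s. c s i) has_real_derivative cd c i t) (at t)"
proof -
  from assms obtain D where D: "\<forall>x\<in>{0..1}. ((\<lambda>s. c s i) has_vector_derivative D x) (at x)"
    unfolding adm_curve_def C1_differentiable_on_def by blast
  have "cd c i t = D t"
    unfolding cd_def using D assms(3)
    by (intro vector_derivative_within_closed_interval) (auto intro: has_vector_derivative_at_within)
  then show ?thesis using D assms(3) by (simp add: has_real_derivative_iff_has_vector_derivative)
qed

lemma adm_cd_cont:
  assumes "adm_curve n c" "i < n"
  shows "continuous_on {0..1} (cd c i)"
proof -
  from assms obtain D where D: "\<forall>x\<in>{0..1}. ((\<lambda>s. c s i) has_vector_derivative D x) (at x)"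
    and Dc: "continuous_on {0..1} D"
    unfolding adm_curve_def C1_differentiable_on_def by blast
  have "\<forall>t\<in>{0..1}. D t = cd c i t"
    unfolding cd_def using D
    by (auto intro!: vector_derivative_within_closed_interval[symmetric] intro: has_vector_derivative_at_within)
  then show ?thesis using Dc continuous_on_cong by blast
qed

lemma adm_coord_cont:
  assumes "adm_curve n c" "i < n"
  shows "continuous_on {0..1} (\<lambda>t. c t i)"
  using assms unfolding adm_curve_def
  by (meson C1_diff_imp_diff differentiable_imp_continuous_on)

lemma len_eq: "curve_length n (gm n) c = integral {0..1} (lenf n c)"
proof -
  have "\<And>t. (\<Sum>i<n. \<Sum>j<n. gm n (c t) i j * cd c i t * cd c j t) = phi n (c t) * (\<Sum>i<n. (cd c i t)^2)"
  proof -
    fix t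
    have "(\<Sum>i<n. \<Sum>j<n. gm n (c t) i j * cd c i t * cd c j t) = (\<Sum>i<n. phi n (c t) * (cd c i t)^2)"
    proof (rule sum.cong[OF refl])
      fix i assume i: "i \<in> {..<n}"
      have "(\<Sum>j<n. gm n (c t) i j * cd c i t * cd c j t) = (\<Sum>j<n. if i = j then phi n (c t) * cd c i t * cd c j t else 0)"
        by (intro sum.cong) (auto simp: gm_def)
      also have "\<dots> = phi n (c t) * (cd c i t)^2"
        using i sum.delta'[of "{..<n}" i "\<lambda>j. phi n (c t) * cd c i t * cd c j t"]
        by (simp add: power2_eq_square)
      finally show "(\<Sum>j<n. gm n (c t) i j * cd c i t * cd c j t) = phi n (c t) * (cd c i t)^2" .
    qed
    then show "(\<Sum>i<n. \<Sum>j<n. gm n (c t) i j * cd c i t * cd c j t) = phi n (c t) * (\<Sum>i<n. (cd c i t)^2)"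
      by (simp add: sum_distrib_left)
  qed
  then show ?thesis unfolding curve_length_def lenf_def cd_def by simp
qed

lemma lenf_nonneg: "0 \<le> lenf n c t"
  unfolding lenf_def by (simp add: phi_pos less_imp_le sum_nonneg)

lemma phi_alt: "phi n y = inverse (sqrt (1 + (\<Sum>i<n. (y i)^2)))"
  by (simp add: phi_def ssq_def)

lemma lenf_cont:
  assumes "adm_curve n c"
  shows "continuous_on {0..1} (lenf n c)"
proof -
  have c1: "\<And>i. i \<in> {..<n} \<Longrightarrow> continuous_on {0..1} (\<lambda>t. c t i)"
    using adm_coord_cont[OF assms] by simp
  have c2: "\<And>i. i \<in> {..<n} \<Longrightarrow> continuous_on {0..1} (cd c i)"
    using adm_cd_cont[OF assms] by simp
  have pos: "\<And>t. sqrt (1 + (\<Sum>i<n. (c t i)^2)) \<noteq> 0"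
    by (metis ssq_def ssq_ne real_sqrt_eq_zero_cancel_iff)
  have "continuous_on {0..1} (\<lambda>t. sqrt (inverse (sqrt (1 + (\<Sum>i<n. (c t i)^2))) * (\<Sum>i<n. (cd c i t)^2)))"
    using c1 c2 pos by (intro continuous_intros) auto
  then show ?thesis unfolding lenf_def phi_alt .
qed

lemma len_integrable: "adm_curve n c \<Longrightarrow> lenf n c integrable_on {0..1}"
  by (rule integrable_continuous_interval[OF lenf_cont])

lemma len_nonneg: "adm_curve n c \<Longrightarrow> 0 \<le> curve_length n (gm n) c"
  unfolding len_eq by (rule integral_nonneg[OF len_integrable]) (auto simp: lenf_nonneg)

lemma lip:
  assumes c: "adm_curve n c"
    and d: "\<And>t. t \<in> {0..1} \<Longrightarrow> ((\<lambda>s. F (c s)) has_real_derivative h t) (at t within {0..1})"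
    and b: "\<And>t. t \<in> {0..1} \<Longrightarrow> h t \<le> lenf n c t"
  shows "F (c 1) - F (c 0) \<le> curve_length n (gm n) c"
proof -
  have "(h has_integral (F (c 1) - F (c 0))) {0..1}"
    using fundamental_theorem_of_calculus[of 0 1 "\<lambda>s. F (c s)" h] d
    by (simp add: has_real_derivative_iff_has_vector_derivative)
  then show ?thesis unfolding len_eq
    using has_integral_le[OF _ integrable_integral[OF len_integrable[OF c]]] b by blast
qed

definition lc :: "(nat \<Rightarrow> real) \<Rightarrow> (nat \<Rightarrow> real) \<Rightarrow> real \<Rightarrow> nat \<Rightarrow> real" where
  "lc x y t = (\<lambda>i. x i + t * (y i - x i))"

lemma lc_adm: "x \<in> Rn n \<Longrightarrow> y \<in> Rn n \<Longrightarrow> adm_curve n (lc x y)"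
  unfolding adm_curve_def lc_def
  by (auto simp: Rn_def intro!: C1_differentiable_on_add C1_differentiable_on_mult)

lemma lc_ends[simp]: "lc x y 0 = x" "lc x y 1 = y"
  by (auto simp: lc_def)

lemma lc_cd: "t \<in> {0..1} \<Longrightarrow> cd (lc x y) i t = y i - x i"
  unfolding cd_def lc_def
  by (rule vector_derivative_within_closed_interval)
     (auto simp: has_real_derivative_iff_has_vector_derivative[symmetric] intro!: derivative_eq_intros)

lemma phi_le1: "phi n x \<le> 1"
  unfolding phi_def by (simp add: inverse_le_1_iff)

definition edist :: "nat \<Rightarrow> (nat \<Rightarrow> real) \<Rightarrow> (nat \<Rightarrow> real) \<Rightarrow> real" where
  "edist n x y = sqrt (\<Sum>i<n. (y i - x i)^2)"

lemma length_le:
  assumes "adm_curve n c" "\<And>t. t \<in> {0..1} \<Longrightarrow> lenf n c t \<le> B"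
  shows "curve_length n (gm n) c \<le> B"
proof -
  have "(lenf n c has_integral integral {0..1} (lenf n c)) {0..1}"
    by (rule integrable_integral[OF len_integrable[OF assms(1)]])
  moreover have "((\<lambda>t::real. B) has_integral B) {0..1}"
    using has_integral_const_real[of B 0 1] by simp
  ultimately have "integral {0..1} (lenf n c) \<le> B" using assms(2) by (rule has_integral_le)
  then show ?thesis by (simp add: len_eq)
qed

lemma lc_len: "x \<in> Rn n \<Longrightarrow> y \<in> Rn n \<Longrightarrow> curve_length n (gm n) (lc x y) \<le> edist n x y"
proof (rule length_le[OF lc_adm])
  fix t :: real assume t: "t \<in> {0..1}"
  have "lenf n (lc x y) t = sqrt (phi n (lc x y t) * (\<Sum>i<n. (y i - x i)^2))"
    unfolding lenf_def using t by (simp add: lc_cd)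
  also have "\<dots> \<le> sqrt (1 * (\<Sum>i<n. (y i - x i)^2))"
    by (intro real_sqrt_le_mono mult_right_mono phi_le1 sum_nonneg) auto
  finally show "lenf n (lc x y) t \<le> edist n x y" by (simp add: edist_def)
qed

lemma curves_ne: "x \<in> Rn n \<Longrightarrow> y \<in> Rn n \<Longrightarrow> {curve_length n (gm n) c | c. adm_curve n c \<and> c 0 = x \<and> c 1 = y} \<noteq> {}"
  using lc_adm by fastforce

lemma rdist_le_curve:
  assumes "adm_curve n c" "c 0 = x" "c 1 = y"
  shows "rdist n (gm n) x y \<le> curve_length n (gm n) c"
  unfolding rdist_def
  by (rule cInf_lower) (use assms len_nonneg in \<open>auto intro!: bdd_belowI[of _ 0]\<close>)

lemma rdist_le_edist: "x \<in> Rn n \<Longrightarrow> y \<in> Rn n \<Longrightarrow> rdist n (gm n) x y \<le> edist n x y"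
  using rdist_le_curve[OF lc_adm lc_ends] lc_len order_trans by blast

lemma rdist_nonneg: "x \<in> Rn n \<Longrightarrow> y \<in> Rn n \<Longrightarrow> 0 \<le> rdist n (gm n) x y"
  unfolding rdist_def
  by (rule cInf_greatest[OF curves_ne]) (auto simp: len_nonneg)

lemma rdist_ge:
  assumes "x \<in> Rn n" "y \<in> Rn n"
    and "\<And>c. adm_curve n c \<Longrightarrow> c 0 = x \<Longrightarrow> c 1 = y \<Longrightarrow> B \<le> curve_length n (gm n) c"
  shows "B \<le> rdist n (gm n) x y"
  unfolding rdist_def
  by (rule cInf_greatest[OF curves_ne[OF assms(1,2)]]) (use assms(3) in auto)

definition ip :: "nat \<Rightarrow> (nat \<Rightarrow> real) \<Rightarrow> (nat \<Rightarrow> real) \<Rightarrow> real" where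
  "ip n x y = (\<Sum>i<n. x i * y i)"

definition fe :: "nat \<Rightarrow> (nat \<Rightarrow> real) \<Rightarrow> (nat \<Rightarrow> real) \<Rightarrow> real" where
  "fe n e x = sqrt (2 * (sqrt (1 + ssq n x) + ip n x e))"

lemma ip_CS: "(ip n x e)^2 \<le> ssq n x * ssq n e"
  unfolding ip_def ssq_def by (rule Cauchy_Schwarz_ineq_sum)

lemma ip_lt:
  assumes "ssq n e = 1"
  shows "\<bar>ip n x e\<bar> < sqrt (1 + ssq n x)"
proof -
  have "(ip n x e)^2 < 1 + ssq n x" using ip_CS[of n x e] assms by simp
  then have "sqrt ((ip n x e)^2) < sqrt (1 + ssq n x)" by (rule real_sqrt_less_mono)
  then show ?thesis by simp
qed

lemma fe_arg_pos: "ssq n e = 1 \<Longrightarrow> 0 < sqrt (1 + ssq n x) + ip n x e"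
  using ip_lt[of n e x] by linarith

lemma fe_deriv:
  assumes c: "adm_curve n c" and t: "t \<in> {0..1}" and e: "ssq n e = 1"
  defines "A \<equiv> sqrt (1 + ssq n (c t))"
  defines "K \<equiv> inverse A / 2 * (\<Sum>i<n. 2 * c t i * cd c i t) + (\<Sum>i<n. cd c i t * e i)"
  defines "u \<equiv> 2 * (A + ip n (c t) e)"
  shows "((\<lambda>s. fe n e (c s)) has_real_derivative inverse (sqrt u) / 2 * (2 * K)) (at t)"
proof -
  have dci: "\<And>i. i \<in> {..<n} \<Longrightarrow> ((\<lambda>s. c s i) has_real_derivative cd c i t) (at t)"
    using adm_hasderiv[OF c _ t] by simp
  have ds0: "((\<lambda>s. 1 + ssq n (c s)) has_real_derivative (\<Sum>i<n. 2 * (cd c i t * c t i))) (at t)"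
    unfolding ssq_def
    by (rule derivative_eq_intros DERIV_sum | rule dci | simp)+
  have eqs: "(\<Sum>i<n. 2 * (cd c i t * c t i)) = (\<Sum>i<n. 2 * c t i * cd c i t)"
    by (simp add: ac_simps)
  have ds: "((\<lambda>s. 1 + ssq n (c s)) has_real_derivative (\<Sum>i<n. 2 * c t i * cd c i t)) (at t)"
    using ds0 unfolding eqs .
  have dA: "((\<lambda>s. sqrt (1 + ssq n (c s))) has_real_derivative inverse A / 2 * (\<Sum>i<n. 2 * c t i * cd c i t)) (at t)"
    unfolding A_def by (rule DERIV_chain2[OF DERIV_real_sqrt ds]) simp
  have dw: "((\<lambda>s. ip n (c s) e) has_real_derivative (\<Sum>i<n. cd c i t * e i)) (at t)"
    unfolding ip_def
    by (rule DERIV_sum, rule DERIV_cmult_right[OF dci]) simp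
  have du: "((\<lambda>s. 2 * (sqrt (1 + ssq n (c s)) + ip n (c s) e)) has_real_derivative 2 * K) (at t)"
    unfolding K_def by (rule DERIV_cmult[OF DERIV_add[OF dA dw]])
  have upos: "0 < u" unfolding u_def A_def by (rule mult_pos_pos) (simp, rule fe_arg_pos[OF e])
  show ?thesis
    unfolding fe_def u_def A_def
    by (rule DERIV_chain2[OF DERIV_real_sqrt du]) (use upos[unfolded u_def A_def] in assumption)
qed

lemma inv_aux: "inverse (a::real) / 2 * (2 * x) = x / a"
  by (cases "a = 0") (simp_all add: field_simps)

lemma sq_aux: "A \<noteq> 0 \<Longrightarrow> (a / A + b)^2 = a^2 / A^2 + 2 * (a * b) / A + (b::real)^2"
  by (simp add: field_simps power2_eq_square)

lemma fe_bound:
  assumes c: "adm_curve n c" and t: "t \<in> {0..1}" and e: "ssq n e = 1"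
  defines "A \<equiv> sqrt (1 + ssq n (c t))"
  defines "K \<equiv> inverse A / 2 * (\<Sum>i<n. 2 * c t i * cd c i t) + (\<Sum>i<n. cd c i t * e i)"
  defines "u \<equiv> 2 * (A + ip n (c t) e)"
  shows "\<bar>inverse (sqrt u) / 2 * (2 * K)\<bar> \<le> lenf n c t"
proof -
  define V where "V = (\<Sum>i<n. (cd c i t)^2)"
  define w where "w = ip n (c t) e"
  define s where "s = ssq n (c t)"
  have A: "A > 0" "A^2 = 1 + s" unfolding A_def s_def using ssq_pos1[of n "c t"] by simp_all
  have upos: "0 < u" unfolding u_def A_def by (rule mult_pos_pos) (simp, rule fe_arg_pos[OF e])
  have k1: "(\<Sum>i<n. 2 * c t i * cd c i t) = 2 * (\<Sum>i<n. c t i * cd c i t)"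
    by (simp add: sum_distrib_left mult.assoc)
  have k2: "(\<Sum>i<n. (c t i / A + e i) * cd c i t) = (\<Sum>i<n. c t i * cd c i t) / A + (\<Sum>i<n. cd c i t * e i)"
  proof -
    have "(\<Sum>i<n. (c t i / A + e i) * cd c i t) = (\<Sum>i<n. c t i * cd c i t / A + cd c i t * e i)"
      by (intro sum.cong refl) (simp add: ring_distribs times_divide_eq_right mult.commute)
    also have "\<dots> = (\<Sum>i<n. c t i * cd c i t) / A + (\<Sum>i<n. cd c i t * e i)"
      by (simp only: sum.distrib sum_divide_distrib)
    finally show ?thesis .
  qed
  have Kal: "K = (\<Sum>i<n. (c t i / A + e i) * cd c i t)"
    unfolding K_def k1 k2 inv_aux ..
  have G: "(\<Sum>i<n. (c t i / A + e i)^2) = s / A^2 + 2 * w / A + 1"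
  proof -
    have "(\<Sum>i<n. (c t i / A + e i)^2) = (\<Sum>i<n. (c t i)^2 / A^2 + 2 * (c t i * e i) / A + (e i)^2)"
      using A(1) by (intro sum.cong refl) (rule sq_aux, simp)
    also have "\<dots> = (\<Sum>i<n. (c t i)^2) / A^2 + 2 * (\<Sum>i<n. c t i * e i) / A + (\<Sum>i<n. (e i)^2)"
      by (simp only: sum.distrib sum_divide_distrib sum_distrib_left)
    also have "(\<Sum>i<n. (c t i)^2) = s" by (simp add: s_def ssq_def)
    also have "(\<Sum>i<n. c t i * e i) = w" by (simp add: w_def ip_def)
    also have "(\<Sum>i<n. (e i)^2) = 1" using e by (simp add: ssq_def)
    finally show ?thesis .
  qed
  have G2: "s / A^2 + 2 * w / A + 1 \<le> u / A"
  proof -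
    have s0: "s \<ge> 0" by (simp add: s_def)
    have "s / A^2 \<le> 1" unfolding A(2) using s0 by (simp add: divide_le_eq)
    then have "s / A^2 + 2 * w / A + 1 \<le> 2 + 2 * w / A" by simp
    also have "\<dots> = u / A" using A unfolding u_def w_def by (simp add: field_simps)
    finally show ?thesis .
  qed
  have KV: "K^2 \<le> (u / A) * V"
  proof -
    have "K^2 \<le> (\<Sum>i<n. (c t i / A + e i)^2) * V"
      unfolding Kal V_def by (rule Cauchy_Schwarz_ineq_sum)
    also have "\<dots> \<le> (u / A) * V"
      using G G2 by (intro mult_right_mono) (auto simp: V_def sum_nonneg)
    finally show ?thesis .
  qed
  have "(inverse (sqrt u) / 2 * (2 * K))^2 = K^2 / u"
    using upos by (simp add: power2_eq_square field_simps)
  also have "\<dots> \<le> ((u / A) * V) / u" by (rule divide_right_mono[OF KV]) (use upos in simp)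
  also have "\<dots> = phi n (c t) * V"
    using upos A by (simp add: phi_def A_def field_simps)
  finally have sq: "(inverse (sqrt u) / 2 * (2 * K))^2 \<le> phi n (c t) * V" .
  have "\<bar>inverse (sqrt u) / 2 * (2 * K)\<bar> = sqrt ((inverse (sqrt u) / 2 * (2 * K))^2)" by simp
  also have "\<dots> \<le> sqrt (phi n (c t) * V)" using sq by (rule real_sqrt_le_mono)
  finally show ?thesis by (simp add: lenf_def V_def)
qed

lemma fe_lip:
  assumes c: "adm_curve n c" and e: "ssq n e = 1"
  shows "\<bar>fe n e (c 1) - fe n e (c 0)\<bar> \<le> curve_length n (gm n) c"
proof -
  define H where "H t = (let A = sqrt (1 + ssq n (c t));
      K = inverse A / 2 * (\<Sum>i<n. 2 * c t i * cd c i t) + (\<Sum>i<n. cd c i t * e i);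
      u = 2 * (A + ip n (c t) e) in inverse (sqrt u) / 2 * (2 * K))" for t
  have d: "\<And>t. t \<in> {0..1} \<Longrightarrow> ((\<lambda>s. fe n e (c s)) has_real_derivative H t) (at t within {0..1})"
    unfolding H_def Let_def using fe_deriv[OF c _ e] by (blast intro: has_field_derivative_at_within)
  have b: "\<And>t. t \<in> {0..1} \<Longrightarrow> \<bar>H t\<bar> \<le> lenf n c t"
    unfolding H_def Let_def using fe_bound[OF c _ e] by blast
  have 1: "fe n e (c 1) - fe n e (c 0) \<le> curve_length n (gm n) c"
    by (rule lip[OF c d]) (use b in \<open>auto intro: order_trans[OF abs_ge_self]\<close>)
  have d2: "\<And>t. t \<in> {0..1} \<Longrightarrow> ((\<lambda>s. - fe n e (c s)) has_real_derivative - H t) (at t within {0..1})"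
    using d by (rule DERIV_minus)
  have 2: "- fe n e (c 1) - - fe n e (c 0) \<le> curve_length n (gm n) c"
    by (rule lip[OF c d2]) (use b in \<open>auto intro: order_trans[OF abs_ge_minus_self]\<close>)
  show ?thesis using 1 2 by linarith
qed

lemma fe_rdist:
  assumes "x \<in> Rn n" "y \<in> Rn n" "ssq n e = 1"
  shows "\<bar>fe n e y - fe n e x\<bar> \<le> rdist n (gm n) x y"
  by (rule rdist_ge[OF assms(1,2)]) (use fe_lip assms(3) in blast)

definition uv :: "nat \<Rightarrow> real \<Rightarrow> nat \<Rightarrow> real" where
  "uv i a = (\<lambda>j. if j = i then a else 0)"

lemma ssq_uv: "i < n \<Longrightarrow> a^2 = 1 \<Longrightarrow> ssq n (uv i a) = 1"
proof -
  assume i: "i < n" and a: "a^2 = 1"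
  have "ssq n (uv i a) = (\<Sum>j<n. if i = j then a^2 else 0)"
    unfolding ssq_def uv_def by (intro sum.cong) auto
  also have "\<dots> = a^2" by (rule sdelta[OF i])
  finally show ?thesis using a by simp
qed

lemma ip_uv: "i < n \<Longrightarrow> ip n x (uv i a) = a * x i"
proof -
  assume i: "i < n"
  have "ip n x (uv i a) = (\<Sum>j<n. if i = j then a * x i else 0)"
    unfolding ip_def uv_def by (intro sum.cong) auto
  also have "\<dots> = a * x i" by (rule sdelta[OF i])
  finally show ?thesis .
qed

lemma fe_sq: "ssq n e = 1 \<Longrightarrow> (fe n e x)^2 = 2 * (sqrt (1 + ssq n x) + ip n x e)"
  unfolding fe_def using fe_arg_pos[of n e x] by simp

lemma coord_fe: "i < n \<Longrightarrow> x i = ((fe n (uv i 1) x)^2 - (fe n (uv i (-1)) x)^2) / 4"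
  using fe_sq[OF ssq_uv[of i n 1]] fe_sq[OF ssq_uv[of i n "-1"]] ip_uv[of i n x] by simp

lemma complete_gm: "complete_metric n (gm n)"
  unfolding complete_metric_def
proof (intro allI impI)
  fix s :: "nat \<Rightarrow> nat \<Rightarrow> real" assume "(\<forall>m. s m \<in> Rn n) \<and> (\<forall>e>0. \<exists>N. \<forall>m\<ge>N. \<forall>k\<ge>N. rdist n (gm n) (s m) (s k) < e)"
  then have sR: "\<And>m. s m \<in> Rn n" and cau: "\<And>e. e > 0 \<Longrightarrow> \<exists>N. \<forall>m\<ge>N. \<forall>k\<ge>N. rdist n (gm n) (s m) (s k) < e"
    by auto
  have fconv: "convergent (\<lambda>m. fe n e (s m))" if e: "ssq n e = 1" for e
  proof -
    have "Cauchy (\<lambda>m. fe n e (s m))"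
    proof (rule metric_CauchyI)
      fix r :: real assume "r > 0"
      then obtain N where N: "\<forall>m\<ge>N. \<forall>k\<ge>N. rdist n (gm n) (s m) (s k) < r" using cau by blast
      show "\<exists>M. \<forall>m\<ge>M. \<forall>k\<ge>M. dist (fe n e (s m)) (fe n e (s k)) < r"
      proof (intro exI allI impI)
        fix m k assume "N \<le> m" "N \<le> k"
        then have "rdist n (gm n) (s m) (s k) < r" using N by blast
        moreover have "\<bar>fe n e (s k) - fe n e (s m)\<bar> \<le> rdist n (gm n) (s m) (s k)"
          by (rule fe_rdist[OF sR sR e])
        ultimately show "dist (fe n e (s m)) (fe n e (s k)) < r"
          by (simp add: dist_real_def abs_minus_commute)
      qed
    qed
    then show ?thesis by (rule Cauchy_convergent)
  qed
  define x where "x = (\<lambda>i. if i < n then lim (\<lambda>m. s m i) else 0)"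
  have xR: "x \<in> Rn n" by (simp add: x_def Rn_def)
  have conv: "(\<lambda>m. s m i) \<longlonglongrightarrow> x i" if i: "i < n" for i
  proof -
    obtain a where a: "(\<lambda>m. fe n (uv i 1) (s m)) \<longlonglongrightarrow> a"
      using fconv[OF ssq_uv[OF i, of 1]] by (auto simp: convergent_def)
    obtain b where b: "(\<lambda>m. fe n (uv i (-1)) (s m)) \<longlonglongrightarrow> b"
      using fconv[OF ssq_uv[OF i, of "-1"]] by (auto simp: convergent_def)
    have "(\<lambda>m. ((fe n (uv i 1) (s m))^2 - (fe n (uv i (-1)) (s m))^2) / 4) \<longlonglongrightarrow> (a^2 - b^2) / 4"
      by (intro tendsto_divide tendsto_diff tendsto_power a b tendsto_const) simp
    then have "(\<lambda>m. s m i) \<longlonglongrightarrow> (a^2 - b^2) / 4"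
      using coord_fe[OF i] by simp
    then have "convergent (\<lambda>m. s m i)" by (auto simp: convergent_def)
    then show ?thesis using i by (simp add: x_def convergent_LIMSEQ_iff)
  qed
  have ed: "(\<lambda>m. edist n (s m) x) \<longlonglongrightarrow> 0"
  proof -
    have "(\<lambda>m. sqrt (\<Sum>i<n. (x i - s m i)^2)) \<longlonglongrightarrow> sqrt (\<Sum>i<n. (x i - x i)^2)"
      using conv by (intro tendsto_intros) auto
    then show ?thesis by (simp add: edist_def)
  qed
  have "(\<lambda>m. rdist n (gm n) (s m) x) \<longlonglongrightarrow> 0"
    by (rule tendsto_sandwich[OF _ _ tendsto_const ed])
       (simp_all add: rdist_nonneg rdist_le_edist sR xR)
  then show "\<exists>x\<in>Rn n. (\<lambda>m. rdist n (gm n) (s m) x) \<longlonglongrightarrow> 0" using xR by blast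
qed

lemma mk_adm:
  assumes R: "\<And>t. t \<in> {0..1} \<Longrightarrow> c t \<in> Rn n"
    and D: "\<And>i t. i < n \<Longrightarrow> t \<in> {0..1} \<Longrightarrow> ((\<lambda>s. c s i) has_real_derivative D i t) (at t)"
    and C: "\<And>i. i < n \<Longrightarrow> continuous_on {0..1} (D i)"
  shows "adm_curve n c"
  unfolding adm_curve_def C1_differentiable_on_def
proof (intro conjI ballI allI impI)
  fix t :: real assume "t \<in> {0..1}" then show "c t \<in> Rn n" using R by blast
next
  fix i assume i: "i < n"
  show "\<exists>D'. (\<forall>x\<in>{0..1}. ((\<lambda>t. c t i) has_vector_derivative D' x) (at x)) \<and> continuous_on {0..1} D'"
    using D[OF i] C[OF i]
    by (intro exI[of _ "D i"]) (auto simp: has_real_derivative_iff_has_vector_derivative)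
qed

lemma mk_cd:
  assumes "((\<lambda>s. c s i) has_real_derivative d) (at t)" "t \<in> {0..1}"
  shows "cd c i t = d"
  unfolding cd_def using assms
  by (intro vector_derivative_within_closed_interval)
     (auto intro: has_field_derivative_at_within simp: has_real_derivative_iff_has_vector_derivative[symmetric])

lemma ssq_lin: "ssq n (\<lambda>i. a * x i + b * y i) = a^2 * ssq n x + 2 * a * b * ip n x y + b^2 * ssq n y"
proof -
  have "ssq n (\<lambda>i. a * x i + b * y i) = (\<Sum>i<n. a^2 * (x i)^2 + 2 * a * b * (x i * y i) + b^2 * (y i)^2)"
    unfolding ssq_def by (intro sum.cong refl) (simp add: power2_eq_square algebra_simps)
  also have "\<dots> = a^2 * ssq n x + 2 * a * b * ip n x y + b^2 * ssq n y"
    by (simp add: sum.distrib sum_distrib_left ssq_def ip_def)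
  finally show ?thesis .
qed

lemma ip_lin: "ip n (\<lambda>i. a * x i + b * y i) z = a * ip n x z + b * ip n y z"
  by (simp add: ip_def sum.distrib sum_distrib_left algebra_simps)

lemma ip_self: "ip n x x = ssq n x"
  by (simp add: ip_def ssq_def power2_eq_square)

definition rf :: "nat \<Rightarrow> (nat \<Rightarrow> real) \<Rightarrow> (nat \<Rightarrow> real) \<Rightarrow> (nat \<Rightarrow> real)" where
  "rf n e x = (\<lambda>i. 1 * x i + (- 2 * ip n x e) * e i)"

lemma rf_ssq: "ssq n e = 1 \<Longrightarrow> ssq n (rf n e x) = ssq n x"
  unfolding rf_def ssq_lin by (simp add: power2_eq_square)

lemma rf_ip: "ssq n e = 1 \<Longrightarrow> ip n (rf n e x) e = - ip n x e"
  unfolding rf_def ip_lin by (simp add: ip_self)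

lemma rf_rf: "ssq n e = 1 \<Longrightarrow> rf n e (rf n e x) = x"
  using rf_ip[of n e x] unfolding rf_def[of n e "rf n e x"] by (auto simp: rf_def)

lemma rf_Rn: "e \<in> Rn n \<Longrightarrow> x \<in> Rn n \<Longrightarrow> rf n e x \<in> Rn n"
  by (auto simp: rf_def Rn_def)

lemma rf_fix: "ip n p e = 0 \<Longrightarrow> rf n e p = p"
  by (auto simp: rf_def)

lemma rf_curve:
  assumes c: "adm_curve n c" and e: "ssq n e = 1" "e \<in> Rn n"
  shows "adm_curve n (\<lambda>t. rf n e (c t))" "curve_length n (gm n) (\<lambda>t. rf n e (c t)) = curve_length n (gm n) c"
proof -
  define D where "D i t = cd c i t + (- 2 * (\<Sum>j<n. cd c j t * e j)) * e i" for i t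
  have R: "\<And>t. t \<in> {0..1} \<Longrightarrow> rf n e (c t) \<in> Rn n"
    using c e by (auto simp: adm_curve_def intro: rf_Rn)
  have Dd: "((\<lambda>s. rf n e (c s) i) has_real_derivative D i t) (at t)" if "i < n" "t \<in> {0..1}" for i t
  proof -
    have dj: "\<And>j. j \<in> {..<n} \<Longrightarrow> ((\<lambda>s. c s j) has_real_derivative cd c j t) (at t)"
      using adm_hasderiv[OF c _ that(2)] by simp
    have "((\<lambda>s. 1 * c s i + (- 2 * (\<Sum>j<n. c s j * e j)) * e i) has_real_derivative
        1 * cd c i t + (- 2 * (\<Sum>j<n. cd c j t * e j)) * e i) (at t)"
      by (intro DERIV_add DERIV_cmult DERIV_mult' DERIV_sum DERIV_cmult_right dj adm_hasderiv[OF c that] DERIV_const | simp)+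
    then show ?thesis by (simp add: rf_def D_def ip_def)
  qed
  have Dc: "continuous_on {0..1} (D i)" if "i < n" for i
    unfolding D_def using adm_cd_cont[OF c] that by (intro continuous_intros) auto
  show "adm_curve n (\<lambda>t. rf n e (c t))" by (rule mk_adm[OF R Dd Dc])
  have "lenf n (\<lambda>t. rf n e (c t)) t = lenf n c t" if t: "t \<in> {0..1}" for t
  proof -
    have "(\<Sum>i<n. (cd (\<lambda>t. rf n e (c t)) i t)^2) = ssq n (rf n e (\<lambda>j. cd c j t))"
      unfolding ssq_def
    proof (intro sum.cong refl)
      fix i assume "i \<in> {..<n}"
      then have i: "i < n" by simp
      have "cd (\<lambda>t. rf n e (c t)) i t = D i t" by (rule mk_cd[where c="\<lambda>t. rf n e (c t)" and i=i, OF Dd[OF i t] t])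
      then show "(cd (\<lambda>t. rf n e (c t)) i t)^2 = (rf n e (\<lambda>j. cd c j t) i)^2"
        by (simp add: D_def rf_def ip_def)
    qed
    also have "\<dots> = (\<Sum>i<n. (cd c i t)^2)" using rf_ssq[OF e(1), of "\<lambda>j. cd c j t"] by (simp add: ssq_def)
    finally show ?thesis by (simp add: lenf_def phi_def rf_ssq[OF e(1)])
  qed
  then show "curve_length n (gm n) (\<lambda>t. rf n e (c t)) = curve_length n (gm n) c"
    unfolding len_eq by (intro integral_cong) auto
qed

lemma rdist_rf:
  assumes e: "ssq n e = 1" "e \<in> Rn n" and p: "ip n p e = 0"
  shows "rdist n (gm n) p (rf n e x) = rdist n (gm n) p x"
proof -
  have sub: "{curve_length n (gm n) c | c. adm_curve n c \<and> c 0 = p \<and> c 1 = y}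
      \<subseteq> {curve_length n (gm n) c | c. adm_curve n c \<and> c 0 = p \<and> c 1 = rf n e y}" for y
  proof
    fix L assume "L \<in> {curve_length n (gm n) c | c. adm_curve n c \<and> c 0 = p \<and> c 1 = y}"
    then obtain c where c: "adm_curve n c" "c 0 = p" "c 1 = y" "L = curve_length n (gm n) c" by blast
    show "L \<in> {curve_length n (gm n) c | c. adm_curve n c \<and> c 0 = p \<and> c 1 = rf n e y}"
      using rf_curve[OF c(1) e] c rf_fix[OF p]
      by (intro CollectI exI[of _ "\<lambda>t. rf n e (c t)"]) auto
  qed
  have "{curve_length n (gm n) c | c. adm_curve n c \<and> c 0 = p \<and> c 1 = rf n e x}
      = {curve_length n (gm n) c | c. adm_curve n c \<and> c 0 = p \<and> c 1 = x}"
    using sub[of x] sub[of "rf n e x"] rf_rf[OF e(1)] by auto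
  then show ?thesis unfolding rdist_def by simp
qed

lemma ssq_scale: "ssq n (\<lambda>i. a * x i) = a^2 * ssq n x"
  by (simp add: ssq_def sum_distrib_left power_mult_distrib)

lemma ip_scale: "ip n (\<lambda>i. a * x i) y = a * ip n x y"
  by (simp add: ip_def sum_distrib_left mult.assoc)

lemma ip_comm: "ip n x y = ip n y x"
  by (simp add: ip_def mult.commute)

lemma exists_e:
  assumes n: "n \<ge> 2" and p: "p \<in> Rn n"
  shows "\<exists>e. e \<in> Rn n \<and> ssq n e = 1 \<and> ip n p e = 0"
proof (cases "p 0 = 0 \<and> p 1 = 0")
  case True
  have "uv 0 1 \<in> Rn n" using n by (auto simp: Rn_def uv_def)
  moreover have "ssq n (uv 0 1) = 1" using n by (intro ssq_uv) auto
  moreover have "ip n p (uv 0 1) = 0" using n True by (subst ip_uv) auto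
  ultimately show ?thesis by blast
next
  case False
  define m where "m = sqrt ((p 0)^2 + (p 1)^2)"
  have m2: "m^2 = (p 0)^2 + (p 1)^2" unfolding m_def by simp
  have mpos: "m > 0" unfolding m_def using False
    by (metis add_nonneg_nonneg power2_eq_square real_sqrt_gt_0_iff sum_squares_gt_zero_iff zero_le_power2)
  define a where "a = - p 1 / m"
  define b where "b = p 0 / m"
  define e where "e = (\<lambda>i. a * uv 0 1 i + b * uv 1 1 i)"
  have e_R: "e \<in> Rn n" using n by (auto simp: Rn_def uv_def e_def)
  have i01: "ip n (uv 0 1) (uv 1 1) = 0" using n by (subst ip_uv) (auto simp: uv_def)
  have "ssq n e = a^2 * 1 + 2 * a * b * 0 + b^2 * 1"
    unfolding e_def ssq_lin using n i01 by (simp add: ssq_uv)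
  also have "\<dots> = a^2 + b^2" by simp
  also have "\<dots> = ((p 0)^2 + (p 1)^2) / m^2" by (simp add: a_def b_def power_divide add_divide_distrib add.commute)
  also have "\<dots> = m^2 / m^2" by (simp only: m2)
  also have "\<dots> = 1" using mpos by simp
  finally have e1: "ssq n e = 1" .
  have "ip n p e = ip n e p" by (rule ip_comm)
  also have "\<dots> = a * p 0 + b * p 1"
    unfolding e_def ip_lin using n by (simp add: ip_comm[of n "uv _ _" p] ip_uv)
  also have "\<dots> = 0" by (simp add: a_def b_def field_simps)
  finally show ?thesis using e_R e1 by blast
qed

lemma curve_bound:
  assumes p: "p \<in> Rn n" and e: "e \<in> Rn n" "ssq n e = 1" "ip n p e = 0" and l: "l \<ge> 0"
  shows "rdist n (gm n) p (\<lambda>i. l * e i) \<le> sqrt (ssq n p) + 2 * sqrt l"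
proof -
  define c where "c t = (\<lambda>i. (1 - t) * p i + (t^2 * l) * e i)" for t
  define D where "D i t = (- 1) * p i + (2 * t * l) * e i" for i t
  have R: "\<And>t. t \<in> {0..1} \<Longrightarrow> c t \<in> Rn n" using p e by (auto simp: Rn_def c_def)
  have Dd: "((\<lambda>s. c s i) has_real_derivative D i t) (at t)" for i t
    unfolding c_def D_def by (auto intro!: derivative_eq_intros)
  have Dc: "continuous_on {0..1} (D i)" for i unfolding D_def by (intro continuous_intros)
  have adm: "adm_curve n c" by (rule mk_adm[OF R Dd Dc])
  have c0: "c 0 = p" and c1: "c 1 = (\<lambda>i. l * e i)" by (auto simp: c_def)
  have "curve_length n (gm n) c \<le> sqrt (ssq n p) + 2 * sqrt l"
  proof (rule length_le[OF adm])
    fix t :: real assume t: "t \<in> {0..1}"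
    define P2 where "P2 = ssq n p"
    define Q where "Q = sqrt (1 + ssq n (c t))"
    have cdD: "\<And>i. cd c i t = D i t" by (rule mk_cd[OF Dd t])
    have sD: "(\<Sum>i<n. (cd c i t)^2) = P2 + 4 * t^2 * l^2"
    proof -
      have "(\<Sum>i<n. (cd c i t)^2) = ssq n (\<lambda>i. (- 1) * p i + (2 * t * l) * e i)"
        by (simp add: cdD D_def ssq_def)
      also have "\<dots> = P2 + 4 * t^2 * l^2" unfolding ssq_lin using e by (simp add: P2_def power_mult_distrib)
      finally show ?thesis .
    qed
    have sc: "ssq n (c t) = (1 - t)^2 * P2 + t^4 * l^2"
      unfolding c_def ssq_lin using e by (simp add: P2_def power_mult_distrib flip: power_mult)
    have P20: "P2 \<ge> 0" by (simp add: P2_def)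
    have Q1: "Q \<ge> 1" unfolding Q_def by simp
    have Q2: "Q \<ge> t^2 * l"
    proof -
      have "sqrt ((t^2 * l)^2) \<le> Q" unfolding Q_def sc
        by (rule real_sqrt_le_mono) (simp add: power_mult_distrib flip: power_mult, rule add_nonneg_nonneg, auto simp: P20)
      then show ?thesis using l by simp
    qed
    have Qpos: "Q > 0" using Q1 by simp
    have b1: "P2 / Q \<le> P2" using Q1 P20 by (simp add: divide_le_eq mult_le_cancel_left1)
    have b2: "4 * t^2 * l^2 / Q \<le> 4 * l"
    proof -
      have "4 * t^2 * l^2 = 4 * l * (t^2 * l)" by (simp add: power2_eq_square)
      also have "\<dots> \<le> 4 * l * Q" using Q2 l by (intro mult_left_mono) auto
      finally show ?thesis using Qpos by (simp add: divide_le_eq)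
    qed
    have "phi n (c t) * (\<Sum>i<n. (cd c i t)^2) = P2 / Q + 4 * t^2 * l^2 / Q"
      unfolding sD by (simp add: phi_def Q_def divide_inverse algebra_simps)
    also have "\<dots> \<le> P2 + 4 * l" using b1 b2 by simp
    also have "\<dots> \<le> (sqrt P2 + 2 * sqrt l)^2"
      using P20 l by (simp add: power2_sum power_mult_distrib)
    finally have "phi n (c t) * (\<Sum>i<n. (cd c i t)^2) \<le> (sqrt P2 + 2 * sqrt l)^2" .
    then have "lenf n c t \<le> sqrt ((sqrt P2 + 2 * sqrt l)^2)"
      unfolding lenf_def by (rule real_sqrt_le_mono)
    then show "lenf n c t \<le> sqrt (ssq n p) + 2 * sqrt l" using P20 l by (simp add: P2_def)
  qed
  then show ?thesis using rdist_le_curve[OF adm c0 c1] by linarith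
qed

lemma fe_nonneg: "ssq n e = 1 \<Longrightarrow> 0 \<le> fe n e x"
  using fe_arg_pos[of n e x] by (simp add: fe_def)

lemma ssq_neg: "ssq n (\<lambda>i. - e i) = ssq n e"
  using ssq_scale[of n "-1" e] by simp

lemma ip_neg: "ip n x (\<lambda>i. - e i) = - ip n x e"
  using ip_scale[of n "-1" e x] ip_comm[of n x e] ip_comm[of n x "\<lambda>i. - e i"] by simp

lemma fe_pm: "ssq n e = 1 \<Longrightarrow> (fe n e x)^2 + (fe n (\<lambda>i. - e i) x)^2 = 4 * sqrt (1 + ssq n x)"
  using fe_sq[of n e x] fe_sq[of n "\<lambda>i. - e i" x] ssq_neg[of n e] ip_neg[of n x e] by simp

lemma sq_diff_le: "(a - b)^2 \<le> 2 * a^2 + 2 * (b::real)^2"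
proof -
  have "0 \<le> (a + b)^2" by simp
  then show ?thesis by (simp add: power2_eq_square algebra_simps)
qed

lemma sphere_bdd:
  assumes p: "p \<in> Rn n" and e: "ssq n e = 1"
  shows "bdd_above {rdist n (gm n) x y | x y. x \<in> geo_sphere n (gm n) p r \<and> y \<in> geo_sphere n (gm n) p r}"
proof -
  define F1 where "F1 = fe n e p"
  define F2 where "F2 = fe n (\<lambda>i. - e i) p"
  define B where "B = ((F1 + r)^2 + (F2 + r)^2) / 4"
  have e2: "ssq n (\<lambda>i. - e i) = 1" using e ssq_neg by simp
  have zb: "ssq n z \<le> B^2" if z: "z \<in> geo_sphere n (gm n) p r" for z
  proof -
    have zR: "z \<in> Rn n" and zr: "rdist n (gm n) p z = r" using z by (auto simp: geo_sphere_def)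
    have a1: "fe n e z \<le> F1 + r" using fe_rdist[OF p zR e] zr unfolding F1_def by linarith
    have a2: "fe n (\<lambda>i. - e i) z \<le> F2 + r" using fe_rdist[OF p zR e2] zr unfolding F2_def by linarith
    have "(fe n e z)^2 \<le> (F1 + r)^2" by (rule power_mono[OF a1 fe_nonneg[OF e]])
    moreover have "(fe n (\<lambda>i. - e i) z)^2 \<le> (F2 + r)^2" by (rule power_mono[OF a2 fe_nonneg[OF e2]])
    ultimately have "4 * sqrt (1 + ssq n z) \<le> 4 * B" using fe_pm[OF e, of z] by (simp add: B_def)
    then have sB: "sqrt (1 + ssq n z) \<le> B" by simp
    have "ssq n z \<le> (sqrt (1 + ssq n z))^2" by simp
    also have "\<dots> \<le> B^2" by (rule power_mono[OF sB]) simp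
    finally show ?thesis .
  qed
  show ?thesis
  proof (rule bdd_aboveI[of _ "sqrt (4 * B^2)"], clarify)
    fix x y assume x: "x \<in> geo_sphere n (gm n) p r" and y: "y \<in> geo_sphere n (gm n) p r"
    have xR: "x \<in> Rn n" and yR: "y \<in> Rn n" using x y by (auto simp: geo_sphere_def)
    have "rdist n (gm n) x y \<le> edist n x y" by (rule rdist_le_edist[OF xR yR])
    also have "\<dots> \<le> sqrt (2 * ssq n y + 2 * ssq n x)"
      unfolding edist_def ssq_def
      by (rule real_sqrt_le_mono) (simp add: sum_distrib_left sum.distrib[symmetric] sum_mono sq_diff_le)
    also have "\<dots> \<le> sqrt (4 * B^2)" using zb[OF x] zb[OF y] by simp
    finally show "rdist n (gm n) x y \<le> sqrt (4 * B^2)" .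
  qed
qed

lemma key:
  assumes n: "n \<ge> 2" and p: "p \<in> Rn n" and eps: "\<epsilon> > 0"
  shows "\<exists>r \<ge> N. rdiam n (gm n) (geo_sphere n (gm n) p r) / r \<ge> 1 - \<epsilon>"
proof -
  obtain e where eR: "e \<in> Rn n" and e1: "ssq n e = 1" and pe: "ip n p e = 0"
    using exists_e[OF n p] by blast
  define P where "P = sqrt (ssq n p)"
  define F where "F = fe n e p"
  define mu where "mu = max (max (max N 1 + F) ((2 + P) / \<epsilon>)) 3"
  have mu1: "mu \<ge> max N 1 + F" and mu2: "mu \<ge> (2 + P) / \<epsilon>" and mu3: "mu \<ge> 3"
    unfolding mu_def by auto
  define l where "l = mu^2 / 4"
  have l0: "l \<ge> 0" by (simp add: l_def)
  have sl: "sqrt l = mu / 2" using mu3 by (simp add: l_def real_sqrt_divide)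
  define x where "x = (\<lambda>i. l * e i)"
  have xR: "x \<in> Rn n" using eR by (auto simp: x_def Rn_def)
  have sx: "ssq n x = l^2" unfolding x_def ssq_scale e1 by simp
  have ix: "ip n x e = l" unfolding x_def ip_scale ip_self e1 by simp
  have fx: "mu \<le> fe n e x"
  proof -
    have "mu^2 \<le> 2 * (sqrt (1 + ssq n x) + ip n x e)"
    proof -
      have "l \<le> sqrt (1 + l^2)" using l0 by (simp add: real_le_rsqrt)
      then show ?thesis unfolding sx ix l_def by simp
    qed
    then show ?thesis unfolding fe_def by (rule real_le_rsqrt)
  qed
  define y where "y = rf n e x"
  have yR: "y \<in> Rn n" unfolding y_def by (rule rf_Rn[OF eR xR])
  have sy: "ssq n y = l^2" unfolding y_def rf_ssq[OF e1] by (rule sx)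
  have iy: "ip n y e = - l" unfolding y_def rf_ip[OF e1] ix ..
  have fy: "fe n e y \<le> 2"
  proof -
    have "1 + l^2 \<le> (1 + l)^2" using l0 by (simp add: power2_sum)
    then have "sqrt (1 + l^2) \<le> sqrt ((1 + l)^2)" by (rule real_sqrt_le_mono)
    then have "sqrt (1 + l^2) \<le> 1 + l" using l0 by simp
    then have "2 * (sqrt (1 + ssq n y) + ip n y e) \<le> 4" unfolding sy iy by simp
    then have "fe n e y \<le> sqrt 4" unfolding fe_def by (rule real_sqrt_le_mono)
    then show ?thesis by simp
  qed
  define r where "r = rdist n (gm n) p x"
  have r_lo: "mu - F \<le> r" using fe_rdist[OF p xR e1] fx unfolding r_def F_def by linarith
  have rN: "r \<ge> N" and r1: "r \<ge> 1" using r_lo mu1 by auto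
  have r_hi: "r \<le> P + mu"
    using curve_bound[OF p eR e1 pe l0] sl unfolding r_def P_def x_def by simp
  have ry: "rdist n (gm n) p y = r" unfolding y_def r_def by (rule rdist_rf[OF e1 eR pe])
  have xS: "x \<in> geo_sphere n (gm n) p r" using xR by (simp add: geo_sphere_def r_def)
  have yS: "y \<in> geo_sphere n (gm n) p r" using yR ry by (simp add: geo_sphere_def)
  have dxy: "mu - 2 \<le> rdist n (gm n) x y" using fe_rdist[OF xR yR e1] fx fy by linarith
  have diam: "mu - 2 \<le> rdiam n (gm n) (geo_sphere n (gm n) p r)"
  proof -
    have "rdist n (gm n) x y \<le> rdiam n (gm n) (geo_sphere n (gm n) p r)"
      unfolding rdiam_def by (rule cSup_upper[OF _ sphere_bdd[OF p e1]]) (use xS yS in blast)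
    then show ?thesis using dxy by linarith
  qed
  have P0: "P \<ge> 0" by (simp add: P_def)
  have "(mu - 2) / (P + mu) \<le> rdiam n (gm n) (geo_sphere n (gm n) p r) / r"
  proof -
    have "(mu - 2) / (P + mu) \<le> (mu - 2) / r"
      using mu3 r1 r_hi by (intro divide_left_mono) auto
    also have "\<dots> \<le> rdiam n (gm n) (geo_sphere n (gm n) p r) / r"
      using diam r1 by (intro divide_right_mono) auto
    finally show ?thesis .
  qed
  moreover have "1 - \<epsilon> \<le> (mu - 2) / (P + mu)"
  proof -
    have "2 + P \<le> \<epsilon> * mu" using mu2 eps by (simp add: divide_le_eq mult.commute)
    then have "(1 - \<epsilon>) * (P + mu) \<le> mu - 2" using eps P0
      by (simp add: algebra_simps) (smt (verit) mult_nonneg_nonneg)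
    then show ?thesis using P0 mu3 by (simp add: le_divide_eq)
  qed
  ultimately show ?thesis using rN by (intro exI[of _ r]) auto
qed

lemma limsup_ge:
  assumes n: "n \<ge> 2" and p: "p \<in> Rn n"
  shows "Limsup at_top (\<lambda>r. ereal (rdiam n (gm n) (geo_sphere n (gm n) p r) / r)) \<ge> 1"
  unfolding Limsup_def
proof (rule INF_greatest)
  fix P :: "real \<Rightarrow> bool" assume "P \<in> {P. eventually P at_top}"
  then obtain N where N: "\<And>r. r \<ge> N \<Longrightarrow> P r" by (auto simp: eventually_at_top_linorder)
  show "1 \<le> (SUP r\<in>Collect P. ereal (rdiam n (gm n) (geo_sphere n (gm n) p r) / r))"
  proof (rule ereal_le_epsilon2)
    fix \<epsilon> :: real assume eps: "0 < \<epsilon>"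
    obtain r where r: "r \<ge> N" and ra: "rdiam n (gm n) (geo_sphere n (gm n) p r) / r \<ge> 1 - \<epsilon>"
      using key[OF n p eps] by blast
    have "ereal (rdiam n (gm n) (geo_sphere n (gm n) p r) / r)
        \<le> (SUP r\<in>Collect P. ereal (rdiam n (gm n) (geo_sphere n (gm n) p r) / r))"
      by (rule SUP_upper) (use N r in auto)
    moreover have "1 \<le> ereal (rdiam n (gm n) (geo_sphere n (gm n) p r) / r) + ereal \<epsilon>"
      using ra by simp
    ultimately show "1 \<le> (SUP r\<in>Collect P. ereal (rdiam n (gm n) (geo_sphere n (gm n) p r) / r)) + ereal \<epsilon>"
      by (meson add_right_mono order_trans)
  qed
qed

theorem corollary2:
  shows "\<exists>N::nat. \<forall>n\<ge>N. \<exists>g. riem_metric n g \<and> complete_metric n g \<and> pos_ricci n g \<and>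
     (\<forall>p\<in>Rn n. Limsup at_top (\<lambda>r. ereal (rdiam n g (geo_sphere n g p r) / r)) \<ge> 1)"
proof (intro exI[of _ 2] allI impI)
  fix n :: nat assume n: "2 \<le> n"
  show "\<exists>g. riem_metric n g \<and> complete_metric n g \<and> pos_ricci n g \<and>
     (\<forall>p\<in>Rn n. Limsup at_top (\<lambda>r. ereal (rdiam n g (geo_sphere n g p r) / r)) \<ge> 1)"
    using riem_gm complete_gm pos_ricci_gm[OF n] limsup_ge[OF n] by blast
qed

end
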